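(* Let $G=(G_1,\ldots,G_p):(\mathbb{R}^m,0)\to(\mathbb{R}^p,0)$, $m>p\ge2$, be a real analytic map germ, and suppose that $\det D(x)>0$ for all $x\in M(G)\setminus(V_G\cup\mathrm{Sing}\,G)$ (in a small neighbourhood of $0$). Then $a(x)>0$ for all such $x$. In particular, if $\mathrm{Disc}\,G=\{0\}$, then there exists a Milnor vector field for $G$ on $B^m_\varepsilon\setminus V_G$ for some small $\varepsilon>0$, and $\Psi_G$ is $\rho$-regular.
   Context: $\rho(x)=\|x\|^2$, $V_G=G^{-1}(0)$, $\mathrm{Sing}\,G=\{x:\mathrm{rank}\,JG(x)<p\}$, $\mathrm{Disc}\,G=G(\mathrm{Sing}\,G)$ as a set germ at $0$. $M(G)$ is the germ at $0$ of the closure of the set of points $x$ where $\nabla\rho(x),\nabla G_1(x),\ldots,\nabla G_p(x)$ are linearly dependent. For $x\in M(G)\setminus(V_G\cup\mathrm{Sing}\,G)$, $a(x)$ is the unique real number with $\nabla\rho(x)-a(x)\nabla\|G(x)\|^2\in W(x):=\{\sum_ic_i\nabla G_i(x): c\in\mathbb{R}^p,\ \sum_ic_iG_i(x)=0\}$. On $\{G_1\ne0\}$ (analogously on $\{G_j\ne0\}$ with index $j$ playing the role of $1$), $\Omega_k=G_1\nabla G_k-G_k\nabla G_1$, $k=2,\dots,p$, span $W(x)$, and $D(x)$ is the $p\times p$ matrix whose first column is $(\langle\nabla\rho,\nabla\|G\|^2\rangle,\langle\nabla\rho,\Omega_2\rangle,\ldots,\langle\nabla\rho,\Omega_p\rangle)^t$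 and whose $(i,j)$ entry for $j\ge2$ is $\langle\Omega_j,w_i\rangle$, where $(w_1,\ldots,w_p)=(\nabla\|G\|^2,\Omega_2,\ldots,\Omega_p)$. $\Psi_G=G/\|G\|:U\setminus V_G\to S^{p-1}$. $M(\Psi_G)$ is the germ at $0$ of the closure of the set of $x\in U\setminus V_G$ at which $(\rho,\Psi_G):U\setminus V_G\to\mathbb{R}\times S^{p-1}$ is not a submersion; $\Psi_G$ is $\rho$-regular if $M(\Psi_G)\setminus G^{-1}(\mathrm{Disc}\,G)=\emptyset$. When $\mathrm{Disc}\,G=\{0\}$, a Milnor vector field for $G$ on $B^m_\varepsilon\setminus V_G$ is a vector field $\nu$ such that for every $x\in B^m_\varepsilon\setminus V_G$: $\nu(x)$ is tangent to the fibre $\Psi_G^{-1}(\Psi_G(x))$, $\langle\nu(x),\nabla\rho(x)\rangle>0$, and $\langle\nu(x),\nabla\|G(x)\|^2\rangle>0$. *)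

theory Defs
  imports "HOL-Analysis.Analysis"
begin

definition real_analytic_on :: "(real^'m::finite \<Rightarrow> real) \<Rightarrow> (real^'m) set \<Rightarrow> bool" where
  "real_analytic_on f U \<longleftrightarrow>
     (\<forall>x\<in>U. \<exists>r>0. \<exists>c :: ('m \<Rightarrow> nat) \<Rightarrow> real.
        \<forall>y\<in>ball x r. ((\<lambda>\<alpha>. c \<alpha> * (\<Prod>i\<in>UNIV. (y$i - x$i) ^ \<alpha> i)) has_sum f y) UNIV)"

definition analytic_map_germ :: "(real^'m::finite \<Rightarrow> real^'p::finite) \<Rightarrow> bool" where
  "analytic_map_germ G \<longleftrightarrow> G 0 = 0 \<and>
     (\<exists>U. open U \<and> 0 \<in> U \<and> (\<forall>i. real_analytic_on (\<lambda>y. G y $ i) U))"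

definition rho :: "real^'m::finite \<Rightarrow> real" where
  "rho x = (norm x)^2"

definition grad :: "(real^'m::finite \<Rightarrow> real) \<Rightarrow> real^'m \<Rightarrow> real^'m" where
  "grad f x = (\<chi> j. frechet_derivative f (at x) (axis j 1))"

definition jacobian :: "(real^'m::finite \<Rightarrow> real^'p::finite) \<Rightarrow> real^'m \<Rightarrow> real^'m^'p" where
  "jacobian G x = (\<chi> i. grad (\<lambda>y. G y $ i) x)"

definition V_G :: "(real^'m::finite \<Rightarrow> real^'p::finite) \<Rightarrow> (real^'m) set" where
  "V_G G = G -` {0}"

definition Sing :: "(real^'m::finite \<Rightarrow> real^'p::finite) \<Rightarrow> (real^'m) set" where
  "Sing G = {x. rank (jacobian G x) < CARD('p)}"

definition Disc :: "(real^'m::finite \<Rightarrow> real^'p::finite) \<Rightarrow> real \<Rightarrow> (real^'p) set" where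
  "Disc G r = G ` (Sing G \<inter> ball 0 r)"

text \<open>Disc G = {0} as set germs at 0.\<close>
definition Disc_trivial :: "(real^'m::finite \<Rightarrow> real^'p::finite) \<Rightarrow> bool" where
  "Disc_trivial G \<longleftrightarrow> (\<exists>r>0. Disc G r \<subseteq> {0})"

text \<open>Representative on ball 0 r of M(G): closure of the set where
  grad rho, grad G_1, ..., grad G_p are linearly dependent.\<close>
definition M_G :: "(real^'m::finite \<Rightarrow> real^'p::finite) \<Rightarrow> real \<Rightarrow> (real^'m) set" where
  "M_G G r = closure {x \<in> ball 0 r. \<exists>(c0::real) (c::real^'p). (c0 \<noteq> 0 \<or> c \<noteq> 0) \<and>
      c0 *\<^sub>R grad rho x + (\<Sum>i\<in>UNIV. c $ i *\<^sub>R grad (\<lambda>y. G y $ i) x) = 0}"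

definition normsqG :: "(real^'m::finite \<Rightarrow> real^'p::finite) \<Rightarrow> real^'m \<Rightarrow> real" where
  "normsqG G y = (norm (G y))^2"

definition W_space :: "(real^'m::finite \<Rightarrow> real^'p::finite) \<Rightarrow> real^'m \<Rightarrow> (real^'m) set" where
  "W_space G x = {(\<Sum>i\<in>UNIV. c $ i *\<^sub>R grad (\<lambda>y. G y $ i) x) | c::real^'p.
                    (\<Sum>i\<in>UNIV. c $ i * G x $ i) = 0}"

definition a_fun :: "(real^'m::finite \<Rightarrow> real^'p::finite) \<Rightarrow> real^'m \<Rightarrow> real" where
  "a_fun G x = (THE a. grad rho x - a *\<^sub>R grad (normsqG G) x \<in> W_space G x)"

text \<open>Omega_k = G_j grad G_k - G_k grad G_j, for a chart index j with G_j(x) \<noteq> 0.\<close>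
definition Omega :: "(real^'m::finite \<Rightarrow> real^'p::finite) \<Rightarrow> 'p \<Rightarrow> 'p \<Rightarrow> real^'m \<Rightarrow> real^'m" where
  "Omega G j k x = G x $ j *\<^sub>R grad (\<lambda>y. G y $ k) x - G x $ k *\<^sub>R grad (\<lambda>y. G y $ j) x"

text \<open>The slot j plays the role of the
  index 1 of the paper: w_j = grad ||G||^2 and the j-th column is made of the
  products with grad rho; for k \<noteq> j, w_k = Omega_k and column k has entries
  <Omega_k, w_i>.  This is the paper's matrix up to a simultaneous permutation of
  rows and columns, so the determinant is the same.\<close>
definition D_w :: "(real^'m::finite \<Rightarrow> real^'p::finite) \<Rightarrow> 'p \<Rightarrow> real^'m \<Rightarrow> 'p \<Rightarrow> real^'m" where
  "D_w G j x i = (if i = j then grad (normsqG G) x else Omega G j i x)"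

definition D_mat :: "(real^'m::finite \<Rightarrow> real^'p::finite) \<Rightarrow> 'p \<Rightarrow> real^'m \<Rightarrow> real^'p^'p" where
  "D_mat G j x = (\<chi> i k. if k = j then grad rho x \<bullet> D_w G j x i
                          else Omega G j k x \<bullet> D_w G j x i)"

definition Psi :: "(real^'m::finite \<Rightarrow> real^'p::finite) \<Rightarrow> real^'m \<Rightarrow> real^'p" where
  "Psi G x = (1 / norm (G x)) *\<^sub>R G x"

text \<open>(rho, Psi_G) is not a submersion at x (target R \<times> S^{p-1} has dimension p).\<close>
definition not_submersion_at :: "(real^'m::finite \<Rightarrow> real^'p::finite) \<Rightarrow> real^'m \<Rightarrow> bool" where
  "not_submersion_at G x \<longleftrightarrow>
     dim (range (frechet_derivative (\<lambda>y. (rho y, Psi G y)) (at x))) < CARD('p)"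

definition M_Psi :: "(real^'m::finite \<Rightarrow> real^'p::finite) \<Rightarrow> real \<Rightarrow> (real^'m) set" where
  "M_Psi G r = closure {x \<in> ball 0 r. G x \<noteq> 0 \<and> not_submersion_at G x}"

text \<open>M(Psi_G) \ G^{-1}(Disc G) = \<emptyset> as germs at 0.\<close>
definition rho_regular :: "(real^'m::finite \<Rightarrow> real^'p::finite) \<Rightarrow> bool" where
  "rho_regular G \<longleftrightarrow> (\<exists>r>0. \<forall>x\<in>M_Psi G r \<inter> ball 0 r. G x \<in> Disc G r)"

text \<open>Milnor vector field on B_eps \ V_G (tangency to the fibre of Psi_G = lies in the
  kernel of the derivative of Psi_G); we also require continuity.\<close>
definition milnor_vector_field ::
  "(real^'m::finite \<Rightarrow> real^'p::finite) \<Rightarrow> real \<Rightarrow> (real^'m \<Rightarrow> real^'m) \<Rightarrow> bool" where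
  "milnor_vector_field G eps \<nu> \<longleftrightarrow>
     continuous_on (cball 0 eps - V_G G) \<nu> \<and>
     (\<forall>x \<in> cball 0 eps - V_G G.
        frechet_derivative (Psi G) (at x) (\<nu> x) = 0 \<and>
        \<nu> x \<bullet> grad rho x > 0 \<and>
        \<nu> x \<bullet> grad (normsqG G) x > 0)"

end

theory Submission
  imports Defs
begin
lemma finite_box_funs: "finite {\<alpha>::'m::finite \<Rightarrow> nat. \<forall>i. \<alpha> i \<le> N}"
proof -
  have "{\<alpha>::'m::finite \<Rightarrow> nat. \<forall>i. \<alpha> i \<le> N} = PiE UNIV (\<lambda>_. {..N})"
    by (auto simp: PiE_UNIV_domain)
  then show ?thesis by (simp add: finite_PiE)
qed

lemma has_sum_seq:
  fixes f :: "'a \<Rightarrow> real"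
  assumes "(f has_sum S) UNIV" "\<And>N. finite (F N)" "mono F" "\<And>x. \<exists>N. x \<in> F N"
  shows "(\<lambda>N. sum f (F N)) \<longlonglongrightarrow> S"
proof -
  have fl: "filterlim F (finite_subsets_at_top UNIV) sequentially"
    unfolding filterlim_def le_filter_def eventually_filtermap
  proof (intro allI impI)
    fix P :: "'a set \<Rightarrow> bool" assume "eventually P (finite_subsets_at_top UNIV)"
    then obtain X :: "'a set" where X: "finite X" "\<And>Y. finite Y \<Longrightarrow> X \<subseteq> Y \<Longrightarrow> P Y"
      unfolding eventually_finite_subsets_at_top by auto
    have "\<exists>N. X \<subseteq> F N" using X(1)
    proof (induction X rule: finite_induct)
      case empty then show ?case by auto
    next
      case (insert x X)
      then obtain N where N: "X \<subseteq> F N" by auto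
      obtain M where M: "x \<in> F M" using assms(4) by auto
      have "F N \<subseteq> F (max N M)" "F M \<subseteq> F (max N M)" using assms(3)
        by (auto simp: mono_def)
      then show ?case using N M by (intro exI[of _ "max N M"]) auto
    qed
    then obtain N where N: "X \<subseteq> F N" by auto
    show "eventually (\<lambda>x. P (F x)) sequentially"
      unfolding eventually_sequentially
    proof (intro exI allI impI)
      fix n assume "N \<le> n"
      then have "F N \<subseteq> F n" using assms(3) by (auto simp: mono_def)
      then show "P (F n)" using X N assms(2) by blast
    qed
  qed
  have "(sum f \<longlongrightarrow> S) (finite_subsets_at_top UNIV)" using assms(1) by (simp add: has_sum_def)
  from filterlim_compose[OF this fl] show ?thesis by (simp add: o_def)
qed

lemma tail_to_zero:
  fixes b :: "'a \<Rightarrow> real"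
  assumes "b summable_on UNIV" "\<And>N. finite (F N)" "mono F" "\<And>x. \<exists>N. x \<in> F N"
  shows "(\<lambda>N. infsum b (- F N)) \<longlonglongrightarrow> 0"
proof -
  have eq: "infsum b (- F N) = infsum b UNIV - sum b (F N)" for N
  proof -
    have "infsum b UNIV = infsum b (F N \<union> - F N)" by simp
    also have "\<dots> = infsum b (F N) + infsum b (- F N)"
      by (rule infsum_Un_disjoint) (auto intro: summable_on_subset_banach[OF assms(1)] assms(2))
    finally show ?thesis using assms(2) by simp
  qed
  have "(\<lambda>N. sum b (F N)) \<longlonglongrightarrow> infsum b UNIV"
    by (rule has_sum_seq) (use assms in auto)
  then have "(\<lambda>N. infsum b UNIV - sum b (F N)) \<longlonglongrightarrow> infsum b UNIV - infsum b UNIV"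
    by (intro tendsto_intros)
  then show ?thesis unfolding eq by simp
qed

definition monom :: "('m::finite \<Rightarrow> nat) \<Rightarrow> real^'m \<Rightarrow> real" where
  "monom \<alpha> y = (\<Prod>i\<in>UNIV. y$i ^ \<alpha> i)"

definition monoD :: "('m::finite \<Rightarrow> nat) \<Rightarrow> real^'m \<Rightarrow> real^'m \<Rightarrow> real" where
  "monoD \<alpha> y h = (\<Sum>i\<in>UNIV. (of_nat (\<alpha> i) * h$i * y$i ^ (\<alpha> i - 1)) * (\<Prod>j\<in>UNIV-{i}. y$j ^ \<alpha> j))"

lemma mono_deriv: "((monom \<alpha>) has_derivative monoD \<alpha> y) (at y within T)"
proof -
  have "((\<lambda>y. y$i ^ \<alpha> i) has_derivative (\<lambda>h. of_nat (\<alpha> i) * h$i * y$i ^ (\<alpha> i - 1))) (at y within T)" for i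
    using has_derivative_power[OF bounded_linear_imp_has_derivative[OF bounded_linear_vec_nth[of i]]] .
  then have "((\<lambda>y. \<Prod>i\<in>UNIV. y$i ^ \<alpha> i) has_derivative
     (\<lambda>h. \<Sum>i\<in>UNIV. (of_nat (\<alpha> i) * h$i * y$i ^ (\<alpha> i - 1)) * (\<Prod>j\<in>UNIV-{i}. y$j ^ \<alpha> j))) (at y within T)"
    by (rule has_derivative_prod)
  then show ?thesis unfolding monom_def[abs_def] monoD_def[abs_def] .
qed

lemma pow2_bound: "Suc n \<le> 2 ^ n"
  by (induction n) auto

lemma L1:
  fixes t s :: real
  assumes "0 \<le> t" "t \<le> s/2" "0 < s"
  shows "of_nat k * t^(k-1) \<le> s^k / s"
proof (cases k)
  case 0 then show ?thesis using assms by simp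
next
  case (Suc n)
  have "of_nat k * t^(k-1) = real (Suc n) * t^n" using Suc by simp
  also have "\<dots> \<le> real (Suc n) * (s/2)^n" using assms by (intro mult_left_mono power_mono) auto
  also have "\<dots> = (real (Suc n) / 2^n) * s^n" by (simp add: power_divide)
  also have "\<dots> \<le> 1 * s^n"
  proof (rule mult_right_mono)
    have "real (Suc n) \<le> 2^n" using pow2_bound[of n] by (metis of_nat_le_iff of_nat_numeral of_nat_power)
    then show "real (Suc n) / 2^n \<le> 1" by simp
  qed (use assms in simp)
  also have "\<dots> = s^k / s" using Suc assms by simp
  finally show ?thesis .
qed

lemma monoD_bound:
  fixes y h :: "real^'m::finite"
  assumes "norm y \<le> s/2" "0 < s"
  shows "\<bar>monoD \<alpha> y h\<bar> \<le> real CARD('m) / s * (\<Prod>i\<in>UNIV. s ^ \<alpha> i) * norm h"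
proof -
  have yj: "\<bar>y$j\<bar> \<le> s/2" for j using component_le_norm_cart[of y j] assms by simp
  have trm: "\<bar>(of_nat (\<alpha> i) * h$i * y$i ^ (\<alpha> i - 1)) * (\<Prod>j\<in>UNIV-{i}. y$j ^ \<alpha> j)\<bar>
        \<le> (\<Prod>i\<in>UNIV. s ^ \<alpha> i) / s * norm h" for i
  proof -
    have a: "\<bar>of_nat (\<alpha> i) * y$i ^ (\<alpha> i - 1)\<bar> \<le> s ^ \<alpha> i / s"
      using L1[of "\<bar>y$i\<bar>" s "\<alpha> i"] yj[of i] assms by (simp add: abs_mult power_abs)
    have b: "\<bar>\<Prod>j\<in>UNIV-{i}. y$j ^ \<alpha> j\<bar> \<le> (\<Prod>j\<in>UNIV-{i}. s ^ \<alpha> j)"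
      unfolding abs_prod
      by (intro prod_mono) (use yj assms in \<open>auto simp: power_abs intro!: power_mono, smt (verit) yj\<close>)
    have c: "\<bar>h$i\<bar> \<le> norm h" by (rule component_le_norm_cart)
    have "\<bar>(of_nat (\<alpha> i) * h$i * y$i ^ (\<alpha> i - 1)) * (\<Prod>j\<in>UNIV-{i}. y$j ^ \<alpha> j)\<bar>
        = \<bar>of_nat (\<alpha> i) * y$i ^ (\<alpha> i - 1)\<bar> * \<bar>h$i\<bar> * \<bar>\<Prod>j\<in>UNIV-{i}. y$j ^ \<alpha> j\<bar>"
      by (simp add: abs_mult)
    also have "\<dots> \<le> (s ^ \<alpha> i / s) * norm h * (\<Prod>j\<in>UNIV-{i}. s ^ \<alpha> j)"
      using a b c assms(2) by (intro mult_mono) (auto simp: prod_nonneg)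
    also have "\<dots> = (s ^ \<alpha> i * (\<Prod>j\<in>UNIV-{i}. s ^ \<alpha> j)) / s * norm h" by simp
    also have "s ^ \<alpha> i * (\<Prod>j\<in>UNIV-{i}. s ^ \<alpha> j) = (\<Prod>j\<in>UNIV. s ^ \<alpha> j)"
      by (metis UNIV_I finite prod.remove)
    finally show ?thesis .
  qed
  have "\<bar>monoD \<alpha> y h\<bar> \<le> (\<Sum>i\<in>UNIV. \<bar>(of_nat (\<alpha> i) * h$i * y$i ^ (\<alpha> i - 1)) * (\<Prod>j\<in>UNIV-{i}. y$j ^ \<alpha> j)\<bar>)"
    unfolding monoD_def by (rule sum_abs)
  also have "\<dots> \<le> (\<Sum>i\<in>(UNIV::'m set). (\<Prod>i\<in>UNIV. s ^ \<alpha> i) / s * norm h)"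
    by (intro sum_mono trm)
  also have "\<dots> = real CARD('m) / s * (\<Prod>i\<in>UNIV. s ^ \<alpha> i) * norm h" by simp
  finally show ?thesis .
qed

lemma analytic_C1:
  fixes f :: "real^'m::finite \<Rightarrow> real"
  assumes "real_analytic_on f U" "0 \<in> U"
  shows "\<exists>\<rho>>0. (\<forall>y\<in>ball 0 \<rho>. (f has_derivative (\<lambda>h. grad f y \<bullet> h)) (at y))
              \<and> continuous_on (ball 0 \<rho>) (grad f)"
proof -
  obtain r c where r: "r > 0" and hs0: "\<forall>y\<in>ball 0 r.
      ((\<lambda>\<alpha>. c \<alpha> * (\<Prod>i\<in>UNIV. (y$i - (0::real^'m)$i) ^ \<alpha> i)) has_sum f y) UNIV"
    using assms unfolding real_analytic_on_def by blast
  have hs: "((\<lambda>\<alpha>. c \<alpha> * monom \<alpha> y) has_sum f y) UNIV" if "y \<in> ball 0 r" for y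
    using hs0 that by (simp add: monom_def)
  define s where "s = r / (2 * real CARD('m))"
  have s: "s > 0" using r by (simp add: s_def)
  define w where "w = ((\<chi> i. s) :: real^'m)"
  have "norm w \<le> (\<Sum>i\<in>UNIV. \<bar>w$i\<bar>)" by (rule norm_le_l1_cart)
  also have "\<dots> = real CARD('m) * s" using s by (simp add: w_def)
  also have "\<dots> = r/2" by (simp add: s_def)
  finally have "w \<in> ball 0 r" using r by simp
  from hs[OF this] have "(\<lambda>\<alpha>. c \<alpha> * monom \<alpha> w) summable_on UNIV" by (auto simp: summable_on_def)
  then have "(\<lambda>\<alpha>. norm (c \<alpha> * monom \<alpha> w)) summable_on UNIV"
    by (rule summable_on_iff_abs_summable_on_real[THEN iffD1])
  define b where "b \<alpha> = \<bar>c \<alpha>\<bar> * (\<Prod>i\<in>UNIV. s ^ \<alpha> i)" for \<alpha> :: "'m \<Rightarrow> nat"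
  have mw: "monom \<alpha> w = (\<Prod>i\<in>UNIV. s ^ \<alpha> i)" for \<alpha> by (simp add: monom_def w_def)
  have b0: "b \<alpha> \<ge> 0" for \<alpha> using s by (simp add: b_def prod_nonneg)
  have bsum: "b summable_on UNIV"
  proof -
    have "norm (c \<alpha> * monom \<alpha> w) = b \<alpha>" for \<alpha>
      using s by (simp add: mw b_def abs_mult prod_nonneg)
    with \<open>(\<lambda>\<alpha>. norm (c \<alpha> * monom \<alpha> w)) summable_on UNIV\<close> show ?thesis by simp
  qed
  define C where "C = real CARD('m) / s"
  have C0: "C \<ge> 0" using s by (simp add: C_def)
  define F where "F N = {\<alpha>::'m\<Rightarrow>nat. \<forall>i. \<alpha> i \<le> N}" for N
  have Ffin: "finite (F N)" for N unfolding F_def by (rule finite_box_funs)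
  have Fmono: "mono F" unfolding F_def mono_def by (auto intro: le_trans)
  have Fcov: "\<exists>N. \<alpha> \<in> F N" for \<alpha>
    by (rule exI[of _ "Max (range \<alpha>)"]) (auto simp: F_def)
  define T where "T N = infsum b (- F N)" for N
  have T0: "(\<lambda>N. T N) \<longlonglongrightarrow> 0" unfolding T_def by (rule tail_to_zero[OF bsum Ffin Fmono Fcov])
  define S where "S = ball (0::real^'m) (s/2)"
  have yS: "norm y \<le> s/2" if "y \<in> S" for y using that by (simp add: S_def)
  define g' where "g' y h = infsum (\<lambda>\<alpha>. c \<alpha> * monoD \<alpha> y h) UNIV" for y h
  have bnd: "norm (c \<alpha> * monoD \<alpha> y h) \<le> norm (C * norm h * b \<alpha>)" if "y \<in> S" for y h \<alpha>
  proof -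
    have "\<bar>c \<alpha> * monoD \<alpha> y h\<bar> = \<bar>c \<alpha>\<bar> * \<bar>monoD \<alpha> y h\<bar>" by (simp add: abs_mult)
    also have "\<dots> \<le> \<bar>c \<alpha>\<bar> * (real CARD('m) / s * (\<Prod>i\<in>UNIV. s ^ \<alpha> i) * norm h)"
      by (intro mult_left_mono monoD_bound yS that s) simp
    also have "\<dots> = C * norm h * b \<alpha>" by (simp add: C_def b_def)
    also have "\<dots> = norm (C * norm h * b \<alpha>)" using C0 b0[of \<alpha>] by simp
    finally show ?thesis by simp
  qed
  have bsum2: "(\<lambda>\<alpha>. norm (C * norm h * b \<alpha>)) summable_on A" for h :: "real^'m" and A
  proof -
    have "(\<lambda>\<alpha>. C * norm h * b \<alpha>) summable_on UNIV"
      using summable_on_cmult_right[OF bsum] by simp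
    then have "(\<lambda>\<alpha>. C * norm h * b \<alpha>) summable_on A" by (rule summable_on_subset_banach) simp
    then show ?thesis by (rule summable_on_iff_abs_summable_on_real[THEN iffD1])
  qed
  have absum: "(\<lambda>\<alpha>. norm (c \<alpha> * monoD \<alpha> y h)) summable_on A" if "y \<in> S" for y h A
    by (rule Infinite_Sum.abs_summable_on_comparison_test[where g="\<lambda>\<alpha>. C * norm h * b \<alpha>"])
       (use bsum2[of h A] bnd[OF that] in auto)
  have summ: "(\<lambda>\<alpha>. c \<alpha> * monoD \<alpha> y h) summable_on A" if "y \<in> S" for y h A
    using absum[OF that] by (rule summable_on_iff_abs_summable_on_real[THEN iffD2])
  have est: "\<bar>(\<Sum>\<alpha>\<in>F N. c \<alpha> * monoD \<alpha> y h) - g' y h\<bar> \<le> C * norm h * T N" if "y \<in> S" for y h N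
  proof -
    have "g' y h = infsum (\<lambda>\<alpha>. c \<alpha> * monoD \<alpha> y h) (F N \<union> - F N)" by (simp add: g'_def)
    also have "\<dots> = infsum (\<lambda>\<alpha>. c \<alpha> * monoD \<alpha> y h) (F N) + infsum (\<lambda>\<alpha>. c \<alpha> * monoD \<alpha> y h) (- F N)"
      by (rule infsum_Un_disjoint) (auto intro: summ[OF that])
    finally have eq: "(\<Sum>\<alpha>\<in>F N. c \<alpha> * monoD \<alpha> y h) - g' y h = - infsum (\<lambda>\<alpha>. c \<alpha> * monoD \<alpha> y h) (- F N)"
      using Ffin by simp
    have "norm (infsum (\<lambda>\<alpha>. c \<alpha> * monoD \<alpha> y h) (- F N)) \<le> infsum (\<lambda>\<alpha>. norm (c \<alpha> * monoD \<alpha> y h)) (- F N)"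
      by (rule norm_infsum_bound[OF absum[OF that]])
    also have "\<dots> \<le> infsum (\<lambda>\<alpha>. C * norm h * b \<alpha>) (- F N)"
    proof (rule infsum_mono)
      show "(\<lambda>\<alpha>. norm (c \<alpha> * monoD \<alpha> y h)) summable_on - F N" using absum[OF that] .
      show "(\<lambda>\<alpha>. C * norm h * b \<alpha>) summable_on - F N"
        using bsum2 by (rule summable_on_iff_abs_summable_on_real[THEN iffD2])
      show "norm (c \<alpha> * monoD \<alpha> y h) \<le> C * norm h * b \<alpha>" for \<alpha>
        using bnd[OF that, where h=h and \<alpha>=\<alpha>] C0 b0[of \<alpha>] by simp
    qed
    also have "\<dots> = C * norm h * T N" unfolding T_def by (rule infsum_cmult_right')
    finally show ?thesis unfolding eq by simp
  qed
  have evT: "\<forall>\<^sub>F N in sequentially. C * T N < e" if "e > 0" for e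
  proof -
    have "(\<lambda>N. C * T N) \<longlonglongrightarrow> C * 0" by (intro tendsto_intros T0)
    then show ?thesis using that by (simp add: order_tendstoD(2))
  qed
  define fN where "fN N y = (\<Sum>\<alpha>\<in>F N. c \<alpha> * monom \<alpha> y)" for N y
  define fN' where "fN' N y h = (\<Sum>\<alpha>\<in>F N. c \<alpha> * monoD \<alpha> y h)" for N y h
  have derf: "(fN N has_derivative fN' N y) (at y within S)" for N y
    unfolding fN_def[abs_def] fN'_def[abs_def]
    by (intro has_derivative_sum has_derivative_mult_right mono_deriv)
  have nle: "\<forall>\<^sub>F N in sequentially. \<forall>x\<in>S. \<forall>h. norm (fN' N x h - g' x h) \<le> e * norm h" if "e > 0" for e
    using evT[OF that]
  proof (rule eventually_mono)
    fix N assume N: "C * T N < e"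
    show "\<forall>x\<in>S. \<forall>h. norm (fN' N x h - g' x h) \<le> e * norm h"
    proof (intro ballI allI)
      fix x h assume x: "x \<in> S"
      have "norm (fN' N x h - g' x h) \<le> C * norm h * T N" using est[OF x] by (simp add: fN'_def)
      also have "\<dots> = (C * T N) * norm h" by simp
      also have "\<dots> \<le> e * norm h" using N by (intro mult_right_mono) auto
      finally show "norm (fN' N x h - g' x h) \<le> e * norm h" .
    qed
  qed
  have Sr: "y \<in> ball 0 r" if "y \<in> S" for y
  proof -
    have c1: "real CARD('m) \<ge> 1" by simp
    have "s = r / 2 / real CARD('m)" by (simp add: s_def)
    also have "\<dots> \<le> r / 2 / 1" using c1 r by (intro divide_left_mono) auto
    finally have "s/2 \<le> r" using r by simp
    then show ?thesis using that by (simp add: S_def)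
  qed
  have limf: "(\<lambda>N. fN N y) \<longlonglongrightarrow> f y" if "y \<in> S" for y
    unfolding fN_def by (rule has_sum_seq[OF hs[OF Sr[OF that]] Ffin Fmono Fcov])
  have "0 \<in> S" using s by (simp add: S_def)
  have cS: "convex S" by (simp add: S_def)
  obtain g where g: "\<forall>x\<in>S. (\<lambda>N. fN N x) \<longlonglongrightarrow> g x \<and> (g has_derivative g' x) (at x within S)"
    using has_derivative_sequence[OF cS derf nle \<open>0 \<in> S\<close> limf[OF \<open>0 \<in> S\<close>]]
    by blast
  have fder: "(f has_derivative g' y) (at y)" if y: "y \<in> S" for y
  proof -
    have gd: "(g has_derivative g' y) (at y within S)" using g y by blast
    have gf: "g x = f x" if "x \<in> S" for x
      using LIMSEQ_unique[OF conjunct1[OF g[rule_format, OF that]] limf[OF that]] .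
    have oS: "open S" by (simp add: S_def)
    have "(f has_derivative g' y) (at y within S)"
      by (rule has_derivative_transform_within_open[OF gd oS y gf])
    then show ?thesis using at_within_open[OF y oS] by simp
  qed
  have gradeq: "grad f y = (\<chi> j. g' y (axis j 1))" if "y \<in> S" for y
    unfolding grad_def using frechet_derivative_at[OF fder[OF that]] by simp
  have lin: "g' y h = grad f y \<bullet> h" if "y \<in> S" for y h
  proof -
    have l: "linear (g' y)" using fder[OF that] has_derivative_linear by blast
    have "g' y h = g' y (\<Sum>j\<in>UNIV. h$j *\<^sub>R axis j 1)"
      using basis_expansion[of h] by (simp add: scalar_mult_eq_scaleR)
    also have "\<dots> = (\<Sum>j\<in>UNIV. g' y (h$j *\<^sub>R axis j 1))"
      by (rule linear_sum[OF l])
    also have "\<dots> = (\<Sum>j\<in>UNIV. h$j * g' y (axis j 1))"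
      by (rule sum.cong) (auto simp: linear_cmul[OF l])
    also have "\<dots> = grad f y \<bullet> h" unfolding gradeq[OF that] inner_vec_def by (simp add: mult.commute)
    finally show ?thesis .
  qed
  have cont: "continuous_on S (grad f)"
  proof -
    have "continuous_on S (\<lambda>y. \<chi> j. g' y (axis j 1))"
    proof (intro continuous_on_vec_lambda)
      fix j :: 'm
      show "continuous_on S (\<lambda>y. g' y (axis j 1))"
      proof (rule uniform_limit_theorem[where f="\<lambda>N y. fN' N y (axis j 1)" and F=sequentially])
        show "\<forall>\<^sub>F N in sequentially. continuous_on S (\<lambda>y. fN' N y (axis j 1))"
          unfolding fN'_def monoD_def by (intro always_eventually allI continuous_intros)
        show "uniform_limit S (\<lambda>N y. fN' N y (axis j 1)) (\<lambda>y. g' y (axis j 1)) sequentially"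
          unfolding uniform_limit_iff
        proof (intro allI impI)
          fix e :: real assume e: "e > 0"
          show "\<forall>\<^sub>F N in sequentially. \<forall>x\<in>S. dist (fN' N x (axis j 1)) (g' x (axis j 1)) < e"
            using evT[OF e]
          proof (rule eventually_mono)
            fix N assume N: "C * T N < e"
            show "\<forall>x\<in>S. dist (fN' N x (axis j 1)) (g' x (axis j 1)) < e"
            proof
              fix x assume x: "x \<in> S"
              have "norm (axis j (1::real)) = 1" by simp
              then show "dist (fN' N x (axis j 1)) (g' x (axis j 1)) < e"
                using est[OF x, where N=N and h="axis j 1"] N by (simp add: fN'_def dist_real_def)
            qed
          qed
        qed
      qed simp
    qed
    then show ?thesis
      by (rule continuous_on_eq) (simp add: gradeq)
  qed
  show ?thesis
  proof (intro exI[of _ "s/2"] conjI ballI)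
    show "s/2 > 0" using s by simp
    show "(f has_derivative (\<lambda>h. grad f y \<bullet> h)) (at y)" if "y \<in> ball 0 (s/2)" for y
    proof -
      have yS: "y \<in> S" using that by (simp add: S_def)
      have "(\<lambda>h. grad f y \<bullet> h) = g' y" using lin[OF yS] by auto
      then show ?thesis using fder[OF yS] by simp
    qed
    show "continuous_on (ball 0 (s/2)) (grad f)" using cont by (simp add: S_def)
  qed
qed

lemma inj_imp_det_nz:
  fixes A :: "real^'n^'n"
  assumes "\<And>c. A *v c = 0 \<Longrightarrow> c = 0"
  shows "det A \<noteq> 0"
proof -
  have "inj ((*v) A)"
  proof (rule injI)
    fix c d assume "A *v c = A *v d"
    then have "A *v (c - d) = 0" by (simp add: matrix_vector_mult_diff_distrib)
    then show "c = d" using assms[of "c - d"] by simp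
  qed
  then have "rank A = CARD('n)" using full_rank_injective by blast
  then show ?thesis using det_eq_0_rank[of A] by simp
qed

lemma det_nz_imp_inj:
  fixes A :: "real^'n^'n"
  assumes "det A \<noteq> 0" "A *v c = 0"
  shows "c = 0"
proof -
  have "rank A = CARD('n)" using det_eq_0_rank[of A] assms(1) rank_bound[of A] by simp
  then have "inj ((*v) A)" using full_rank_injective by blast
  then show ?thesis using assms(2) by (metis injD matrix_vector_mult_0_right)
qed

lemma gram_quad:
  fixes J :: "real^'m^'p"
  shows "c \<bullet> ((J ** transpose J) *v c) = (c v* J) \<bullet> (c v* J)"
proof -
  have "(J ** transpose J) *v c = J *v (transpose J *v c)" by (simp only: matrix_vector_mul_assoc)
  then show ?thesis by (simp add: dot_lmul_matrix)
qed

lemma gram_det_nz: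
  fixes J :: "real^'m^'p"
  assumes "\<And>c. c v* J = 0 \<Longrightarrow> c = 0"
  shows "det (J ** transpose J) \<noteq> 0"
proof (rule inj_imp_det_nz)
  fix c assume "(J ** transpose J) *v c = 0"
  then have "(c v* J) \<bullet> (c v* J) = 0" using gram_quad[of c J] by simp
  then show "c = 0" using assms by simp
qed

lemma continuous_on_det:
  fixes f :: "'a::topological_space \<Rightarrow> real^'n^'n"
  assumes "continuous_on S f"
  shows "continuous_on S (\<lambda>x. det (f x))"
  unfolding det_def by (intro continuous_intros assms)

definition solve :: "real^'n^'n \<Rightarrow> real^'n \<Rightarrow> real^'n" where
  "solve A b = (\<chi> k. det (\<chi> i j. if j = k then b$i else A$i$j) / det A)"

lemma solve_works: "det A \<noteq> 0 \<Longrightarrow> A *v solve A b = b"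
  unfolding solve_def using cramer[of A "solve A b" b] by (simp add: solve_def)

lemma continuous_on_solve:
  fixes A :: "'a::topological_space \<Rightarrow> real^'n^'n"
  assumes "continuous_on S A" "continuous_on S b" "\<And>x. x \<in> S \<Longrightarrow> det (A x) \<noteq> 0"
  shows "continuous_on S (\<lambda>x. solve (A x) (b x))"
proof -
  have ck: "continuous_on S (\<lambda>x. (\<chi> i j. if j = k then b x$i else A x$i$j) :: real^'n^'n)" for k
  proof (intro continuous_on_vec_lambda)
    fix i j :: 'n
    show "continuous_on S (\<lambda>x. if j = k then b x $ i else A x $ i $ j)"
      using assms(1,2) by (cases "j = k") (auto intro!: continuous_on_component)
  qed
  show ?thesis unfolding solve_def
    apply (rule continuous_on_vec_lambda)
    apply (rule continuous_on_divide)
      apply (rule continuous_on_det)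
      apply (rule ck)
     apply (rule continuous_on_det)
     apply (rule assms)
    using assms(3) by auto
qed

lemma psd_det_nonneg:
  fixes M :: "real^'n^'n"
  assumes psd: "\<And>c. 0 \<le> c \<bullet> (M *v c)"
  shows "0 \<le> det M"
proof (rule ccontr)
  assume neg: "\<not> 0 \<le> det M"
  define K where "K s = s *\<^sub>R M + (1 - s) *\<^sub>R (mat 1 :: real^'n^'n)" for s :: real
  have K1: "K 1 = M" by (simp add: K_def)
  have K0: "K 0 = mat 1" by (simp add: K_def)
  have Kv: "K s *v c = s *\<^sub>R (M *v c) + (1 - s) *\<^sub>R c" for s c
    by (simp add: K_def matrix_vector_mult_add_rdistrib scaleR_matrix_vector_assoc[symmetric])
  have cont: "continuous_on {0..1} (\<lambda>s. det (K s))"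
    unfolding K_def by (intro continuous_on_det continuous_intros)
  obtain s where s: "0 \<le> s" "s \<le> 1" "det (K s) = 0"
    using IVT2'[of "\<lambda>s. det (K s)" 1 0 0, OF _ _ _ cont] neg K1 K0 by auto
  have "s \<noteq> 1" using s K1 neg by auto
  then have s1: "s < 1" using s by auto
  have "det (K s) \<noteq> 0"
  proof (rule inj_imp_det_nz)
    fix c assume "K s *v c = 0"
    then have "0 = c \<bullet> (K s *v c)" by simp
    also have "\<dots> = s * (c \<bullet> (M *v c)) + (1 - s) * (c \<bullet> c)" by (simp add: Kv inner_add_right)
    finally have "(1 - s) * (c \<bullet> c) \<le> 0" using psd[of c] s by (smt (verit) mult_nonneg_nonneg)
    then have "c \<bullet> c \<le> 0" using s1 by (simp add: mult_le_0_iff)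
    then show "c = 0" by (metis antisym inner_ge_zero inner_eq_zero_iff)
  qed
  then show False using s by simp
qed

lemma gram_det_nonneg:
  fixes W :: "real^'m^'p"
  shows "0 \<le> det (W ** transpose W)"
  by (rule psd_det_nonneg) (simp add: gram_quad)

lemma vm_add: "(u + v) v* (J::real^'m^'p) = u v* J + v v* J"
  by (simp add: vector_matrix_mult_def vec_eq_iff sum.distrib algebra_simps)
lemma vm_diff: "(u - v) v* (J::real^'m^'p) = u v* J - v v* J"
  by (simp add: vector_matrix_mult_def vec_eq_iff sum_subtractf algebra_simps)
lemma vm_scale: "(a *\<^sub>R u) v* (J::real^'m^'p) = a *\<^sub>R (u v* J)"
  by (simp add: vector_matrix_mult_def vec_eq_iff sum_distrib_left algebra_simps)

definition AJ :: "real^'m^'p \<Rightarrow> real^'p^'p" where "AJ J = J ** transpose J"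
definition dvec :: "real^'m^'p \<Rightarrow> real^'m \<Rightarrow> real^'p" where "dvec J y = solve (AJ J) (J *v y)"
definition zvec :: "real^'m^'p \<Rightarrow> real^'m \<Rightarrow> real^'m" where "zvec J y = y - dvec J y v* J"
definition nvec :: "real^'m^'p \<Rightarrow> real^'p \<Rightarrow> real^'m" where "nvec J g = solve (AJ J) g v* J"

lemma Jv_vm: "J *v (u v* J) = AJ J *v u"
proof -
  have "J *v (u v* J) = J *v (transpose J *v u)" by simp
  also have "\<dots> = AJ J *v u" by (simp only: matrix_vector_mul_assoc AJ_def)
  finally show ?thesis .
qed

lemma vm_inner: "(u v* (J::real^'m^'p)) \<bullet> h = u \<bullet> (J *v h)"
  by (rule dot_lmul_matrix)

context
  fixes J :: "real^'m^'p" and y :: "real^'m" and g :: "real^'p"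
  assumes dA: "det (AJ J) \<noteq> 0"
begin

lemma Jd: "AJ J *v dvec J y = J *v y"
  unfolding dvec_def using solve_works[OF dA] .

lemma Jz: "J *v zvec J y = 0"
  unfolding zvec_def by (simp add: matrix_vector_mult_diff_distrib Jv_vm Jd)

lemma z_orth: "(u v* J) \<bullet> zvec J y = 0"
  by (simp add: vm_inner Jz)

lemma yz: "y \<bullet> zvec J y = zvec J y \<bullet> zvec J y"
proof -
  have "y = zvec J y + dvec J y v* J" by (simp add: zvec_def)
  then have "y \<bullet> zvec J y = (zvec J y + dvec J y v* J) \<bullet> zvec J y" by simp
  also have "\<dots> = zvec J y \<bullet> zvec J y" by (simp add: inner_add_left z_orth)
  finally show ?thesis .
qed

lemma z_zero: "y = u v* J \<Longrightarrow> zvec J y = 0"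
proof -
  assume yu: "y = u v* J"
  have "zvec J y \<bullet> zvec J y = y \<bullet> zvec J y" using yz by simp
  also have "\<dots> = 0" using yu z_orth by simp
  finally show ?thesis by simp
qed

lemma Jn: "J *v nvec J g = g"
  unfolding nvec_def by (simp add: Jv_vm solve_works[OF dA])

lemma nz: "nvec J g \<bullet> zvec J y = 0"
  unfolding nvec_def by (rule z_orth)

lemma ny_z0: "zvec J y = 0 \<Longrightarrow> nvec J g \<bullet> y = dvec J y \<bullet> g"
proof -
  assume "zvec J y = 0"
  then have y: "y = dvec J y v* J" by (simp add: zvec_def)
  have "nvec J g \<bullet> y = y \<bullet> nvec J g" by (simp add: inner_commute)
  also have "\<dots> = (dvec J y v* J) \<bullet> nvec J g" using y by simp
  also have "\<dots> = dvec J y \<bullet> (J *v nvec J g)" by (rule vm_inner)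
  also have "\<dots> = dvec J y \<bullet> g" by (simp add: Jn)
  finally show ?thesis .
qed

end

definition beta :: "real^'m^'p \<Rightarrow> real^'m \<Rightarrow> real^'p \<Rightarrow> real" where
  "beta J y g = (zvec J y \<bullet> zvec J y) / (1 + \<bar>nvec J g \<bullet> y\<bar>) + (max (nvec J g \<bullet> y) 0)^2"

definition mvec :: "real^'m^'p \<Rightarrow> real^'m \<Rightarrow> real^'p \<Rightarrow> real^'m" where
  "mvec J y g = zvec J y + beta J y g *\<^sub>R nvec J g"

lemma mvec_props:
  fixes J :: "real^'m^'p" and y :: "real^'m" and g :: "real^'p"
  assumes dA: "det (AJ J) \<noteq> 0"
    and z0: "zvec J y = 0 \<Longrightarrow> 0 < dvec J y \<bullet> g"
  shows "J *v mvec J y g = beta J y g *\<^sub>R g" "0 < beta J y g" "0 < y \<bullet> mvec J y g"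
proof -
  show "J *v mvec J y g = beta J y g *\<^sub>R g"
    unfolding mvec_def by (simp add: matrix_vector_right_distrib matrix_vector_mult_scaleR Jz[OF dA] Jn[OF dA])
  define z where "z = zvec J y"
  define t where "t = nvec J g \<bullet> y"
  have b: "beta J y g = (z \<bullet> z) / (1 + \<bar>t\<bar>) + (max t 0)^2" by (simp add: beta_def z_def t_def)
  have zt: "z = 0 \<Longrightarrow> 0 < t" using z0 ny_z0[OF dA] by (simp add: z_def t_def)
  have zz: "z \<noteq> 0 \<Longrightarrow> 0 < z \<bullet> z" by simp
  have bpos: "0 < beta J y g"
  proof (cases "z = 0")
    case True then show ?thesis using zt b by simp
  next
    case False
    have "0 < (z \<bullet> z) / (1 + \<bar>t\<bar>)" using zz[OF False] by (simp add: add_pos_nonneg)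
    then show ?thesis using b by (smt (verit) zero_le_power2)
  qed
  then show "0 < beta J y g" .
  have yv: "y \<bullet> mvec J y g = z \<bullet> z + beta J y g * t"
    unfolding mvec_def using yz[OF dA, of y] nz[OF dA, of g y]
    by (simp add: inner_add_right z_def t_def inner_commute)
  show "0 < y \<bullet> mvec J y g"
  proof (cases "t \<ge> 0")
    case True
    show ?thesis
    proof (cases "z = 0")
      case True then show ?thesis using zt yv bpos by simp
    next
      case False then show ?thesis using zz yv bpos \<open>t \<ge> 0\<close>
        by (smt (verit) mult_nonneg_nonneg)
    qed
  next
    case False
    then have z: "z \<noteq> 0" using zt by force
    have bt: "beta J y g = (z \<bullet> z) / (1 + \<bar>t\<bar>)" using b False by simp
    have "beta J y g * t = - ((z \<bullet> z) * \<bar>t\<bar> / (1 + \<bar>t\<bar>))" using False bt by simp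
    moreover have "(z \<bullet> z) * \<bar>t\<bar> / (1 + \<bar>t\<bar>) < z \<bullet> z"
    proof -
      have "(z \<bullet> z) * \<bar>t\<bar> < (z \<bullet> z) * (1 + \<bar>t\<bar>)" using zz[OF z] by simp
      then show ?thesis by (simp add: divide_less_eq add_pos_nonneg)
    qed
    ultimately show ?thesis using yv by simp
  qed
qed

lemma grad_eq:
  fixes f :: "real^'m \<Rightarrow> real"
  assumes "(f has_derivative (\<lambda>h. v \<bullet> h)) (at y)"
  shows "grad f y = v"
proof -
  have "frechet_derivative f (at y) = (\<lambda>h. v \<bullet> h)" using frechet_derivative_at[OF assms] by simp
  then show ?thesis unfolding grad_def by (simp add: vec_eq_iff inner_axis)
qed

lemma grad_rho:
  fixes y :: "real^'m::finite"
  shows "grad rho y = 2 *\<^sub>R y"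
proof (rule grad_eq)
  have "(rho :: real^'m \<Rightarrow> real) = (\<lambda>y. y \<bullet> y)" by (auto simp: rho_def power2_norm_eq_inner)
  moreover have "((\<lambda>y. y \<bullet> y) has_derivative (\<lambda>h. (2 *\<^sub>R y) \<bullet> h)) (at y)"
    by (auto intro!: derivative_eq_intros simp: inner_commute)
  ultimately show "((rho :: real^'m \<Rightarrow> real) has_derivative (\<lambda>h. (2 *\<^sub>R y) \<bullet> h)) (at y)" by simp
qed

lemma jac_vm: "c v* jacobian G y = (\<Sum>i\<in>UNIV. c$i *\<^sub>R grad (\<lambda>y. G y $ i) y)"
  by (simp add: vector_matrix_mult_def jacobian_def vec_eq_iff sum_component mult.commute)

lemma jac_mv: "(jacobian G y *v h) $ i = grad (\<lambda>y. G y $ i) y \<bullet> h"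
  by (simp add: matrix_vector_mult_def jacobian_def inner_vec_def)

lemma W_eq: "W_space G y = {c v* jacobian G y | c. c \<bullet> G y = 0}"
  unfolding W_space_def jac_vm by (simp add: inner_vec_def)

lemma G_deriv:
  assumes "\<And>i. ((\<lambda>y. G y $ i) has_derivative (\<lambda>h. grad (\<lambda>y. G y $ i) y \<bullet> h)) (at y)"
  shows "(G has_derivative (\<lambda>h. jacobian G y *v h)) (at y)"
proof -
  have "((\<lambda>x. G x \<bullet> b) has_derivative (\<lambda>h. (jacobian G y *v h) \<bullet> b)) (at y within UNIV)"
    if "b \<in> Basis" for b
  proof -
    obtain i where b: "b = axis i 1" using \<open>b \<in> Basis\<close> by (auto simp: Basis_vec_def)
    show ?thesis using assms[of i] by (simp add: b inner_axis jac_mv)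
  qed
  then show ?thesis using has_derivative_componentwise_within by blast
qed

lemma grad_normsq:
  assumes "\<And>i. ((\<lambda>y. G y $ i) has_derivative (\<lambda>h. grad (\<lambda>y. G y $ i) y \<bullet> h)) (at y)"
  shows "grad (normsqG G) y = 2 *\<^sub>R (G y v* jacobian G y)"
proof (rule grad_eq)
  have "normsqG G = (\<lambda>y. G y \<bullet> G y)" by (auto simp: normsqG_def power2_norm_eq_inner)
  moreover have "((\<lambda>y. G y \<bullet> G y) has_derivative (\<lambda>h. (2 *\<^sub>R (G y v* jacobian G y)) \<bullet> h)) (at y)"
  proof -
    have eq: "h \<bullet> (G y v* jacobian G y) = G y \<bullet> (jacobian G y *v h)" for h
      by (simp add: inner_commute[of h] vm_inner)
    have eq2: "G y \<bullet> (jacobian G y *v h) + (jacobian G y *v h) \<bullet> G y = 2 * ((G y v* jacobian G y) \<bullet> h)" for h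
      by (simp add: inner_commute[of "jacobian G y *v h"] vm_inner)
    show ?thesis using G_deriv[OF assms]
      by (auto intro!: derivative_eq_intros simp: eq2)
  qed
  ultimately show "(normsqG G has_derivative (\<lambda>h. (2 *\<^sub>R (G y v* jacobian G y)) \<bullet> h)) (at y)" by simp
qed

definition PsiD :: "(real^'m::finite \<Rightarrow> real^'p::finite) \<Rightarrow> real^'m \<Rightarrow> real^'m \<Rightarrow> real^'p" where
  "PsiD G y h = (1 / norm (G y)) *\<^sub>R (jacobian G y *v h)
      - ((G y \<bullet> (jacobian G y *v h)) / norm (G y) ^ 3) *\<^sub>R G y"

lemma Psi_deriv:
  assumes "\<And>i. ((\<lambda>y. G y $ i) has_derivative (\<lambda>h. grad (\<lambda>y. G y $ i) y \<bullet> h)) (at y)"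
    and "G y \<noteq> 0"
  shows "(Psi G has_derivative PsiD G y) (at y)"
proof -
  have "Psi G = (\<lambda>x. (1 / norm (G x)) *\<^sub>R G x)" by (auto simp: Psi_def)
  moreover have "((\<lambda>x. (1 / norm (G x)) *\<^sub>R G x) has_derivative PsiD G y) (at y)"
  proof -
    have nd: "((\<lambda>x. norm (G x)) has_derivative (\<lambda>h. (jacobian G y *v h) \<bullet> sgn (G y))) (at y)"
      using has_derivative_compose[OF G_deriv[OF assms(1)] has_derivative_norm[OF assms(2)]] by simp
    have eq: "(jacobian G y *v h) \<bullet> sgn (G y) / (norm (G y) * norm (G y)) = G y \<bullet> (jacobian G y *v h) / norm (G y) ^ 3" for h
      using assms(2) by (simp add: sgn_div_norm inner_commute power3_eq_cube field_simps)
    show ?thesis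
      using G_deriv[OF assms(1)] assms(2) unfolding PsiD_def[abs_def]
      by (auto intro!: derivative_eq_intros nd simp: eq)
  qed
  ultimately show ?thesis by simp
qed

lemma vm_sum: "(\<Sum>l\<in>S. f l) v* (J::real^'m^'p) = (\<Sum>l\<in>S. f l v* J)"
  by (induction S rule: infinite_finite_induct) (auto simp: vm_add)

lemma key_comb:
  fixes g d :: "real^'p::finite"
  assumes gj: "g$j \<noteq> 0"
  defines "a \<equiv> (d \<bullet> g) / (g \<bullet> g)"
  defines "e \<equiv> 2 *\<^sub>R d - (2 * a) *\<^sub>R g"
  defines "\<beta> \<equiv> (\<chi> l. if l = j then a else e$l / g$j)"
  defines "vv \<equiv> (\<lambda>l. if l = j then 2 *\<^sub>R g else g$j *\<^sub>R axis l 1 - g$l *\<^sub>R axis j 1)"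
  shows "(\<Sum>l\<in>UNIV. \<beta>$l *\<^sub>R vv l) = 2 *\<^sub>R d"
proof -
  have g0: "g \<bullet> g \<noteq> 0" using gj by auto
  have eg: "e \<bullet> g = 0" using g0 by (simp add: e_def a_def inner_diff_left)
  have eg2: "(\<Sum>l\<in>UNIV - {j}. e$l * g$l) = - e$j * g$j"
  proof -
    have "(\<Sum>l\<in>UNIV. e$l * g$l) = 0" using eg by (simp add: inner_vec_def)
    moreover have "(\<Sum>l\<in>UNIV. e$l * g$l) = e$j * g$j + (\<Sum>l\<in>UNIV - {j}. e$l * g$l)"
      by (simp add: sum.remove)
    ultimately show ?thesis by simp
  qed
  have split: "(\<Sum>l\<in>UNIV. \<beta>$l *\<^sub>R vv l) = (2 * a) *\<^sub>R g + (\<Sum>l\<in>UNIV - {j}. (e$l / g$j) *\<^sub>R (g$j *\<^sub>R axis l 1 - g$l *\<^sub>R axis j 1))"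
  proof -
    have "(\<Sum>l\<in>UNIV. \<beta>$l *\<^sub>R vv l) = \<beta>$j *\<^sub>R vv j + (\<Sum>l\<in>UNIV - {j}. \<beta>$l *\<^sub>R vv l)"
      by (rule sum.remove) auto
    also have "(\<Sum>l\<in>UNIV - {j}. \<beta>$l *\<^sub>R vv l) = (\<Sum>l\<in>UNIV - {j}. (e$l / g$j) *\<^sub>R (g$j *\<^sub>R axis l 1 - g$l *\<^sub>R axis j 1))"
      by (rule sum.cong) (auto simp: \<beta>_def vv_def)
    also have "\<beta>$j *\<^sub>R vv j = (2 * a) *\<^sub>R g" by (simp add: \<beta>_def vv_def)
    finally show ?thesis .
  qed
  show ?thesis
  proof (subst vec_eq_iff, intro allI)
    fix i
    have "(\<Sum>l\<in>UNIV. \<beta>$l *\<^sub>R vv l) $ i = 2 * a * g$i + (\<Sum>l\<in>UNIV - {j}. (e$l / g$j) * (g$j * (if l = i then 1 else 0) - g$l * (if j = i then 1 else 0)))"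
      unfolding split by (auto simp: sum_component axis_def eq_commute[of i] intro!: sum.cong)
    also have "\<dots> = 2 * d $ i"
    proof (cases "i = j")
      case True
      have "(\<Sum>l\<in>UNIV - {j}. (e$l / g$j) * (g$j * (if l = i then 1 else 0) - g$l * (if j = i then 1 else 0)))
          = (\<Sum>l\<in>UNIV - {j}. - (e$l * g$l) / g$j)"
        using True by (intro sum.cong) auto
      also have "\<dots> = - (\<Sum>l\<in>UNIV - {j}. e$l * g$l) / g$j"
        by (simp add: sum_divide_distrib sum_negf)
      also have "\<dots> = e$j" using eg2 gj by simp
      finally show ?thesis using True by (simp add: e_def)
    next
      case False
      have "(\<Sum>l\<in>UNIV - {j}. (e$l / g$j) * (g$j * (if l = i then 1 else 0) - g$l * (if j = i then 1 else 0)))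
          = (\<Sum>l\<in>UNIV - {j}. if l = i then e$i else 0)"
        using False gj by (intro sum.cong) auto
      also have "\<dots> = e$i" using False by (simp add: sum.delta)
      finally show ?thesis by (simp add: e_def)
    qed
    finally show "(\<Sum>l\<in>UNIV. \<beta>$l *\<^sub>R vv l) $ i = (2 *\<^sub>R d) $ i" by simp
  qed
qed

lemma gram_eq: "((\<chi> i. w i) ** transpose ((\<chi> i. w i) :: real^'m^'p)) = (\<chi> i l. w i \<bullet> w l)"
  by (simp add: matrix_matrix_mult_def transpose_def vec_eq_iff inner_vec_def)

lemma K3:
  fixes J :: "real^'m::finite^'p::finite" and g d :: "real^'p" and x :: "real^'m"
  assumes x: "x = d v* J" and gj: "g$j \<noteq> 0"
  defines "vv \<equiv> (\<lambda>l. if l = j then 2 *\<^sub>R g else g$j *\<^sub>R axis l 1 - g$l *\<^sub>R axis j 1)"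
  defines "w \<equiv> (\<lambda>l. vv l v* J)"
  shows "det (\<chi> i k. if k = j then (2 *\<^sub>R x) \<bullet> w i else w k \<bullet> w i)
           = ((d \<bullet> g) / (g \<bullet> g)) * det (\<chi> i l. w i \<bullet> w l)"
proof -
  define a where "a = (d \<bullet> g) / (g \<bullet> g)"
  define e where "e = 2 *\<^sub>R d - (2 * a) *\<^sub>R g"
  define \<beta> where "\<beta> = (\<chi> l. if l = j then a else e$l / g$j)"
  define \<Gamma> where "\<Gamma> = (\<chi> i l. w i \<bullet> w l)"
  have comb: "(\<Sum>l\<in>UNIV. \<beta>$l *\<^sub>R vv l) = 2 *\<^sub>R d"
    using key_comb[OF gj, of d] unfolding a_def e_def \<beta>_def vv_def by simp
  have x2: "2 *\<^sub>R x = (\<Sum>l\<in>UNIV. \<beta>$l *\<^sub>R w l)"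
  proof -
    have "2 *\<^sub>R x = (2 *\<^sub>R d) v* J" using x by (simp add: vm_scale)
    also have "\<dots> = (\<Sum>l\<in>UNIV. \<beta>$l *\<^sub>R vv l) v* J" using comb by simp
    also have "\<dots> = (\<Sum>l\<in>UNIV. \<beta>$l *\<^sub>R w l)" by (simp add: vm_sum vm_scale w_def)
    finally show ?thesis .
  qed
  have col: "(2 *\<^sub>R x) \<bullet> w i = (\<Gamma> *v \<beta>) $ i" for i
  proof -
    have "(2 *\<^sub>R x) \<bullet> w i = (\<Sum>l\<in>UNIV. \<beta>$l * (w l \<bullet> w i))"
      by (simp add: x2 inner_sum_left)
    also have "\<dots> = (\<Gamma> *v \<beta>) $ i"
      by (simp add: \<Gamma>_def matrix_vector_mult_def, rule sum.cong, auto simp: inner_commute)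
    finally show ?thesis .
  qed
  have "(\<chi> i k. if k = j then (2 *\<^sub>R x) \<bullet> w i else w k \<bullet> w i) = (\<chi> i k. if k = j then (\<Gamma> *v \<beta>)$i else \<Gamma>$i$k)"
    unfolding col by (simp add: vec_eq_iff \<Gamma>_def inner_commute)
  also have "det \<dots> = \<beta>$j * det \<Gamma>" by (rule cramer_lemma)
  finally show ?thesis by (simp add: \<beta>_def a_def \<Gamma>_def)
qed

lemma submersion_dim:
  fixes J :: "real^'m::finite^'p::finite" and y \<nu> :: "real^'m" and g :: "real^'p"
  assumes dA: "det (AJ J) \<noteq> 0" and g0: "g \<noteq> 0"
    and Jnu: "J *v \<nu> = \<beta> *\<^sub>R g" and ynu: "0 < y \<bullet> \<nu>"
  defines "L \<equiv> (\<lambda>h. ((2 *\<^sub>R y) \<bullet> h, (1 / norm g) *\<^sub>R (J *v h) - ((g \<bullet> (J *v h)) / norm g ^ 3) *\<^sub>R g))"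
  shows "CARD('p) \<le> dim (range L)"
proof -
  have ng: "norm g > 0" using g0 by simp
  have gg: "g \<bullet> g = (norm g)^2" by (simp add: power2_norm_eq_inner)
  have linL: "linear L"
    unfolding L_def
  proof (rule linearI)
    fix b1 b2 :: "real^'m"
    show "((2 *\<^sub>R y) \<bullet> (b1 + b2), (1 / norm g) *\<^sub>R (J *v (b1 + b2)) - ((g \<bullet> (J *v (b1 + b2))) / norm g ^ 3) *\<^sub>R g) =
      ((2 *\<^sub>R y) \<bullet> b1, (1 / norm g) *\<^sub>R (J *v b1) - ((g \<bullet> (J *v b1)) / norm g ^ 3) *\<^sub>R g) +
      ((2 *\<^sub>R y) \<bullet> b2, (1 / norm g) *\<^sub>R (J *v b2) - ((g \<bullet> (J *v b2)) / norm g ^ 3) *\<^sub>R g)"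
      by (simp add: inner_add_right matrix_vector_right_distrib add_divide_distrib scaleR_add_left scaleR_add_right)
  next
    fix r :: real and b :: "real^'m"
    show "((2 *\<^sub>R y) \<bullet> (r *\<^sub>R b), (1 / norm g) *\<^sub>R (J *v (r *\<^sub>R b)) - ((g \<bullet> (J *v (r *\<^sub>R b))) / norm g ^ 3) *\<^sub>R g) =
      r *\<^sub>R ((2 *\<^sub>R y) \<bullet> b, (1 / norm g) *\<^sub>R (J *v b) - ((g \<bullet> (J *v b)) / norm g ^ 3) *\<^sub>R g)"
      by (simp add: matrix_vector_mult_scaleR scaleR_diff_right)
  qed
  define T where "T c = (c \<bullet> g, c - ((c \<bullet> g) / (g \<bullet> g)) *\<^sub>R g)" for c :: "real^'p"
  have linT: "linear T"
    unfolding T_def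
  proof (rule linearI)
    fix b1 b2 :: "real^'p"
    show "((b1 + b2) \<bullet> g, (b1 + b2) - (((b1 + b2) \<bullet> g) / (g \<bullet> g)) *\<^sub>R g) =
       (b1 \<bullet> g, b1 - ((b1 \<bullet> g) / (g \<bullet> g)) *\<^sub>R g) + (b2 \<bullet> g, b2 - ((b2 \<bullet> g) / (g \<bullet> g)) *\<^sub>R g)"
      by (simp add: inner_add_left add_divide_distrib scaleR_add_left)
  next
    fix r :: real and b :: "real^'p"
    show "((r *\<^sub>R b) \<bullet> g, (r *\<^sub>R b) - (((r *\<^sub>R b) \<bullet> g) / (g \<bullet> g)) *\<^sub>R g) =
       r *\<^sub>R (b \<bullet> g, b - ((b \<bullet> g) / (g \<bullet> g)) *\<^sub>R g)"
      by (simp add: scaleR_diff_right)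
  qed
  have injT: "inj T"
  proof (rule injI)
    fix c d assume "T c = T d"
    then have "c \<bullet> g = d \<bullet> g" "c - ((c \<bullet> g) / (g \<bullet> g)) *\<^sub>R g = d - ((d \<bullet> g) / (g \<bullet> g)) *\<^sub>R g"
      by (auto simp: T_def)
    then show "c = d" by simp
  qed
  have sub: "range T \<subseteq> range L"
  proof (rule image_subsetI)
    fix c :: "real^'p" assume "c \<in> UNIV"
    define u where "u = c - ((c \<bullet> g) / (g \<bullet> g)) *\<^sub>R g"
    have ug: "g \<bullet> u = 0" using g0 by (simp add: u_def inner_diff_right inner_commute)
    define h1 where "h1 = solve (AJ J) (norm g *\<^sub>R u) v* J"
    have Jh1: "J *v h1 = norm g *\<^sub>R u" unfolding h1_def by (simp add: Jv_vm solve_works[OF dA])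
    have Lh1: "L h1 = ((2 *\<^sub>R y) \<bullet> h1, u)"
      using ng by (simp add: L_def Jh1 ug)
    have Lnu: "L \<nu> = ((2 *\<^sub>R y) \<bullet> \<nu>, 0)"
      using ng by (simp add: L_def Jnu gg power2_eq_square power3_eq_cube)
    define lam where "lam = (c \<bullet> g - (2 *\<^sub>R y) \<bullet> h1) / ((2 *\<^sub>R y) \<bullet> \<nu>)"
    have pos: "(2 *\<^sub>R y) \<bullet> \<nu> \<noteq> 0" using ynu by simp
    have "L (h1 + lam *\<^sub>R \<nu>) = L h1 + lam *\<^sub>R L \<nu>"
      by (simp add: linear_add[OF linL] linear_cmul[OF linL])
    also have "\<dots> = T c" using pos by (simp add: Lh1 Lnu T_def u_def lam_def)
    finally show "T c \<in> range L" by (metis rangeI)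
  qed
  have "dim (range T) = dim (UNIV :: (real^'p) set)"
    by (rule dim_image_eq[OF linT]) (use injT in \<open>auto simp: inj_on_def inj_def\<close>)
  also have "\<dots> = CARD('p)" by simp
  finally have "dim (range T) = CARD('p)" .
  moreover have "dim (range T) \<le> dim (range L)" by (rule dim_subset[OF sub])
  ultimately show ?thesis by simp
qed

lemma rho_deriv:
  fixes y :: "real^'m::finite"
  shows "(rho has_derivative (\<lambda>h. (2 *\<^sub>R y) \<bullet> h)) (at y)"
proof -
  have "(rho :: real^'m \<Rightarrow> real) = (\<lambda>y. y \<bullet> y)" by (auto simp: rho_def power2_norm_eq_inner)
  moreover have "((\<lambda>y. y \<bullet> y) has_derivative (\<lambda>h. (2 *\<^sub>R y) \<bullet> h)) (at y)"
    by (auto intro!: derivative_eq_intros simp: inner_commute)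
  ultimately show ?thesis by simp
qed

lemma nsing_det:
  fixes G :: "real^'m::finite \<Rightarrow> real^'p::finite"
  assumes "x \<notin> Sing G"
  shows "det (AJ (jacobian G x)) \<noteq> 0"
proof -
  let ?J = "jacobian G x"
  have "rank ?J = CARD('p)" using assms rank_bound[of ?J] by (simp add: Sing_def)
  then have "rank (transpose ?J) = CARD('p)" by (simp add: rank_transpose)
  then have inj: "inj ((*v) (transpose ?J))" using full_rank_injective by blast
  show ?thesis unfolding AJ_def
  proof (rule gram_det_nz)
    fix c assume "c v* ?J = 0"
    then have "transpose ?J *v c = transpose ?J *v 0" by simp
    then show "c = 0" using inj by (meson injD)
  qed
qed

lemma grad_row: "grad (\<lambda>y. G y $ k) x = axis k 1 v* jacobian G x"
  unfolding jac_vm by (simp add: axis_def if_distrib[of "\<lambda>a. a *\<^sub>R _"] sum.delta cong: if_cong)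

lemma cont_mm:
  fixes A :: "'a::topological_space \<Rightarrow> real^'n^'m" and B :: "'a \<Rightarrow> real^'k^'n"
  assumes "continuous_on S A" "continuous_on S B"
  shows "continuous_on S (\<lambda>x. A x ** B x)"
  unfolding matrix_matrix_mult_def by (intro continuous_intros assms)

lemma cont_tr:
  fixes A :: "'a::topological_space \<Rightarrow> real^'n^'m"
  assumes "continuous_on S A"
  shows "continuous_on S (\<lambda>x. transpose (A x))"
  unfolding transpose_def by (intro continuous_intros assms)

lemma cont_mv:
  fixes A :: "'a::topological_space \<Rightarrow> real^'n^'m"
  assumes "continuous_on S A" "continuous_on S b"
  shows "continuous_on S (\<lambda>x. A x *v b x)"
  unfolding matrix_vector_mult_def by (intro continuous_intros assms)

lemma cont_vm:
  fixes A :: "'a::topological_space \<Rightarrow> real^'n^'m"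
  assumes "continuous_on S A" "continuous_on S b"
  shows "continuous_on S (\<lambda>x. b x v* A x)"
  unfolding vector_matrix_mult_def by (intro continuous_intros assms)

lemma D_mat_eq:
  fixes G :: "real^'m::finite \<Rightarrow> real^'p::finite" and j :: 'p and x :: "real^'m"
  assumes HD: "\<And>i. ((\<lambda>y. G y $ i) has_derivative (\<lambda>h. grad (\<lambda>y. G y $ i) x \<bullet> h)) (at x)"
  defines "vv \<equiv> (\<lambda>l. if l = j then 2 *\<^sub>R G x else G x$j *\<^sub>R axis l 1 - G x$l *\<^sub>R axis j 1)"
  defines "w \<equiv> (\<lambda>l. vv l v* jacobian G x)"
  shows "D_mat G j x = (\<chi> i k. if k = j then (2 *\<^sub>R x) \<bullet> w i else w k \<bullet> w i)"
proof -
  have Dw: "D_w G j x i = w i" for i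
  proof (cases "i = j")
    case True
    then show ?thesis using grad_normsq[OF HD]
      by (simp add: D_w_def w_def vv_def vm_scale)
  next
    case False
    then show ?thesis
      by (simp add: D_w_def Omega_def w_def vv_def vm_scale vm_diff grad_row)
  qed
  have Om: "k \<noteq> j \<Longrightarrow> Omega G j k x = w k" for k
    by (simp add: Omega_def w_def vv_def vm_scale vm_diff grad_row)
  show ?thesis unfolding D_mat_def
    by (simp add: vec_eq_iff Dw Om grad_rho)
qed

lemma vm_neg: "(- u) v* (J::real^'m^'p) = - (u v* J)"
  using vm_scale[of "-1" u J] by simp

theorem theorem4p3:
  fixes G :: "real^'m::finite \<Rightarrow> real^'p::finite"
  assumes dims: "CARD('m) > CARD('p)" "CARD('p) \<ge> 2"
    and analytic: "analytic_map_germ G"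
    and detD: "\<exists>r>0. \<forall>x \<in> ball 0 r \<inter> M_G G r - (V_G G \<union> Sing G).
                   \<exists>j. G x $ j \<noteq> 0 \<and> det (D_mat G j x) > 0"
  shows "(\<exists>r>0. \<forall>x \<in> ball 0 r \<inter> M_G G r - (V_G G \<union> Sing G). a_fun G x > 0)
         \<and> (Disc_trivial G \<longrightarrow>
              (\<exists>eps>0. \<exists>\<nu>. milnor_vector_field G eps \<nu>) \<and> rho_regular G)"
proof -
  obtain U where U: "open U" "0 \<in> U" "\<And>i. real_analytic_on (\<lambda>y. G y $ i) U"
    using analytic unfolding analytic_map_germ_def by blast
  have "\<forall>i. \<exists>\<rho>>0. (\<forall>y\<in>ball 0 \<rho>. ((\<lambda>y. G y $ i) has_derivative (\<lambda>h. grad (\<lambda>y. G y $ i) y \<bullet> h)) (at y))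
              \<and> continuous_on (ball 0 \<rho>) (grad (\<lambda>y. G y $ i))"
    using analytic_C1[OF U(3) U(2)] by blast
  then obtain R where R: "\<And>i. R i > 0"
    "\<And>i y. y \<in> ball 0 (R i) \<Longrightarrow> ((\<lambda>y. G y $ i) has_derivative (\<lambda>h. grad (\<lambda>y. G y $ i) y \<bullet> h)) (at y)"
    "\<And>i. continuous_on (ball 0 (R i)) (grad (\<lambda>y. G y $ i))"
    by metis
  define r0 where "r0 = Min (range R)"
  have r0: "r0 > 0" unfolding r0_def using R(1) by (simp add: Min_gr_iff)
  have r0R: "r0 \<le> R i" for i unfolding r0_def by (rule Min_le) auto
  define B0 where "B0 = ball (0::real^'m) r0"
  have B0R: "B0 \<subseteq> ball 0 (R i)" for i using r0R[of i] by (auto simp: B0_def)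
  have HD: "((\<lambda>y. G y $ i) has_derivative (\<lambda>h. grad (\<lambda>y. G y $ i) y \<bullet> h)) (at y)" if "y \<in> B0" for i y
    using R(2) B0R that by blast
  have HC: "continuous_on B0 (grad (\<lambda>y. G y $ i))" for i
    using R(3) B0R continuous_on_subset by blast
  have Gcont: "continuous_on B0 G"
  proof (rule continuous_at_imp_continuous_on, intro ballI)
    fix y assume "y \<in> B0"
    from has_derivative_continuous[OF G_deriv[OF HD[OF this]]] show "isCont G y" .
  qed
  have Jcont: "continuous_on B0 (\<lambda>y. jacobian G y)"
    unfolding jacobian_def by (intro continuous_on_vec_lambda HC)
  have Acont: "continuous_on B0 (\<lambda>y. AJ (jacobian G y))"
    unfolding AJ_def by (intro cont_mm cont_tr Jcont)
  define O1 where "O1 = {y \<in> B0. det (AJ (jacobian G y)) \<noteq> 0}"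
  have O1B: "O1 \<subseteq> B0" by (auto simp: O1_def)
  have oB0: "open B0" by (simp add: B0_def)
  have oO1: "open O1"
  proof -
    have "open ((\<lambda>y. det (AJ (jacobian G y))) -` (- {0}) \<inter> B0)"
      using continuous_on_open_vimage[OF oB0] continuous_on_det[OF Acont] by blast
    moreover have "(\<lambda>y. det (AJ (jacobian G y))) -` (- {0}) \<inter> B0 = O1" by (auto simp: O1_def)
    ultimately show ?thesis by simp
  qed
  have detO1: "y \<in> O1 \<Longrightarrow> det (AJ (jacobian G y)) \<noteq> 0" for y by (simp add: O1_def)
  have A1: "continuous_on O1 (\<lambda>y. AJ (jacobian G y))" by (rule continuous_on_subset[OF Acont O1B])
  have J1: "continuous_on O1 (\<lambda>y. jacobian G y)" by (rule continuous_on_subset[OF Jcont O1B])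
  have G1: "continuous_on O1 G" by (rule continuous_on_subset[OF Gcont O1B])
  have b1: "continuous_on O1 (\<lambda>y. jacobian G y *v y)" by (rule cont_mv[OF J1 continuous_on_id])
  have dcont: "continuous_on O1 (\<lambda>y. dvec (jacobian G y) y)"
    unfolding dvec_def by (rule continuous_on_solve[OF A1 b1 detO1])
  have zcont: "continuous_on O1 (\<lambda>y. zvec (jacobian G y) y)"
    unfolding zvec_def
    by (intro continuous_intros cont_vm[OF J1 dcont])
  have ncont: "continuous_on O1 (\<lambda>y. nvec (jacobian G y) (G y))"
    unfolding nvec_def
    by (rule cont_vm[OF J1 continuous_on_solve[OF A1 G1 detO1]])
  have mcont: "continuous_on O1 (\<lambda>y. mvec (jacobian G y) y (G y))"
    unfolding mvec_def beta_def
    by (intro continuous_intros zcont ncont) (auto simp: add_pos_nonneg)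
  obtain rD where rD: "rD > 0" and hD: "\<And>x. x \<in> ball 0 rD \<inter> M_G G rD - (V_G G \<union> Sing G) \<Longrightarrow>
                   \<exists>j. G x $ j \<noteq> 0 \<and> det (D_mat G j x) > 0"
    using detD by blast
  define r1 where "r1 = min r0 rD"
  have r1: "r1 > 0" using r0 rD by (simp add: r1_def)
  define Sdep where "Sdep r = {x \<in> ball 0 r. \<exists>(c0::real) (c::real^'p). (c0 \<noteq> 0 \<or> c \<noteq> 0) \<and>
      c0 *\<^sub>R grad rho x + (\<Sum>i\<in>UNIV. c $ i *\<^sub>R grad (\<lambda>y. G y $ i) x) = 0}" for r
  have MS: "M_G G r = closure (Sdep r)" for r by (simp add: M_G_def Sdep_def)
  have Sdep_eq: "Sdep r = {x \<in> ball 0 r. \<exists>(c0::real) (c::real^'p). (c0 \<noteq> 0 \<or> c \<noteq> 0) \<and>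
      c0 *\<^sub>R (2 *\<^sub>R x) + c v* jacobian G x = 0}" for r
    by (simp add: Sdep_def grad_rho jac_vm)
  have r1B0: "ball 0 r1 \<subseteq> B0" by (auto simp: r1_def B0_def)
  have Z: "zvec (jacobian G x) x = 0"
    if x: "x \<in> B0" "x \<notin> Sing G" "x \<in> closure (Sdep r1)" for x
  proof (rule ccontr)
    assume zx: "zvec (jacobian G x) x \<noteq> 0"
    define O2 where "O2 = (\<lambda>y. zvec (jacobian G y) y) -` (- {0}) \<inter> O1"
    have oO2: "open O2" unfolding O2_def using continuous_on_open_vimage[OF oO1] zcont by blast
    have xO2: "x \<in> O2" using x zx nsing_det[OF x(2)] by (simp add: O2_def O1_def)
    have "O2 \<inter> Sdep r1 = {}"
    proof (rule ccontr)
      assume "O2 \<inter> Sdep r1 \<noteq> {}"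
      then obtain y where yO: "y \<in> O2" and yS: "y \<in> Sdep r1" by blast
      have dy: "det (AJ (jacobian G y)) \<noteq> 0" and zy: "zvec (jacobian G y) y \<noteq> 0"
        using yO by (auto simp: O2_def O1_def)
      obtain c0 c where c: "c0 \<noteq> 0 \<or> c \<noteq> 0" "c0 *\<^sub>R (2 *\<^sub>R y) + c v* jacobian G y = 0"
        using yS unfolding Sdep_eq by blast
      show False
      proof (cases "c0 = 0")
        case True
        then have "c v* jacobian G y = 0" using c by simp
        then have "AJ (jacobian G y) *v c = 0" using Jv_vm[of "jacobian G y" c] by simp
        then have "c = 0" by (rule det_nz_imp_inj[OF dy])
        then show False using c True by simp
      next
        case False
        have "y = ((- 1 / (2 * c0)) *\<^sub>R c) v* jacobian G y"
        proof -
          have "(2 * c0) *\<^sub>R y = - (c v* jacobian G y)" using c(2) by (simp add: eq_neg_iff_add_eq_0 mult.commute)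
          have "y = (1 / (2 * c0)) *\<^sub>R ((2 * c0) *\<^sub>R y)" using False by simp
          also have "\<dots> = (- 1 / (2 * c0)) *\<^sub>R (c v* jacobian G y)"
            unfolding \<open>(2 * c0) *\<^sub>R y = - (c v* jacobian G y)\<close> by simp
          finally have "y = (- 1 / (2 * c0)) *\<^sub>R (c v* jacobian G y)" .
          then show ?thesis by (simp only: vm_scale)
        qed
        then have "zvec (jacobian G y) y = 0" by (rule z_zero[OF dy])
        then show False using zy by simp
      qed
    qed
    then have "O2 \<inter> closure (Sdep r1) = {}" using open_Int_closure_eq_empty[OF oO2] by blast
    then show False using xO2 x(3) by blast
  qed
  have P1: "zvec (jacobian G x) x = 0 \<and> 0 < dvec (jacobian G x) x \<bullet> G x
            \<and> a_fun G x = (dvec (jacobian G x) x \<bullet> G x) / (G x \<bullet> G x)"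
    if x: "x \<in> ball 0 r1 \<inter> M_G G r1 - (V_G G \<union> Sing G)" for x
  proof -
    let ?J = "jacobian G x"
    define d where "d = dvec ?J x"
    have xB0: "x \<in> B0" using x r1B0 by auto
    have nS: "x \<notin> Sing G" using x by auto
    have Gx: "G x \<noteq> 0" using x by (auto simp: V_G_def)
    have dA: "det (AJ ?J) \<noteq> 0" by (rule nsing_det[OF nS])
    have z: "zvec ?J x = 0" using Z[OF xB0 nS] x MS by auto
    have xd: "x = d v* ?J" using z by (simp add: zvec_def d_def)
    have "M_G G r1 \<subseteq> M_G G rD" unfolding MS Sdep_def r1_def by (intro closure_mono) auto
    then have "x \<in> ball 0 rD \<inter> M_G G rD - (V_G G \<union> Sing G)" using x by (auto simp: r1_def)
    then obtain j where gj: "G x $ j \<noteq> 0" and Dpos: "det (D_mat G j x) > 0" using hD by blast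
    define vv where "vv = (\<lambda>l. if l = j then 2 *\<^sub>R G x else G x$j *\<^sub>R axis l 1 - G x$l *\<^sub>R axis j 1)"
    define w where "w = (\<lambda>l. vv l v* ?J)"
    have "det (D_mat G j x) = ((d \<bullet> G x) / (G x \<bullet> G x)) * det (\<chi> i l. w i \<bullet> w l)"
      unfolding D_mat_eq[OF HD[OF xB0]] using K3[OF xd gj] by (simp add: w_def vv_def)
    moreover have "0 \<le> det ((\<chi> i l. w i \<bullet> w l) :: real^'p^'p)"
      using gram_det_nonneg[of "\<chi> i. w i"] gram_eq[of w] by simp
    ultimately have apos: "0 < (d \<bullet> G x) / (G x \<bullet> G x)"
    proof -
      assume eq: "det (D_mat G j x) = ((d \<bullet> G x) / (G x \<bullet> G x)) * det (\<chi> i l. w i \<bullet> w l)"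
        and nn: "0 \<le> det ((\<chi> i l. w i \<bullet> w l) :: real^'p^'p)"
      show ?thesis
      proof (rule ccontr)
        assume "\<not> 0 < (d \<bullet> G x) / (G x \<bullet> G x)"
        then have "((d \<bullet> G x) / (G x \<bullet> G x)) * det ((\<chi> i l. w i \<bullet> w l) :: real^'p^'p) \<le> 0"
          using nn by (intro mult_nonpos_nonneg) auto
        then show False using eq Dpos by simp
      qed
    qed
    have gg: "G x \<bullet> G x > 0" using Gx by simp
    have dpos: "0 < d \<bullet> G x" using apos gg by (simp add: zero_less_divide_iff)
    define a0 where "a0 = (d \<bullet> G x) / (G x \<bullet> G x)"
    have Wx: "W_space G x = {c v* ?J | c. c \<bullet> G x = 0}" by (rule W_eq)
    have gn: "grad (normsqG G) x = 2 *\<^sub>R (G x v* ?J)" by (rule grad_normsq[OF HD[OF xB0]])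
    have P: "grad rho x - a *\<^sub>R grad (normsqG G) x \<in> W_space G x \<longleftrightarrow> a = a0" for a
    proof
      assume "grad rho x - a *\<^sub>R grad (normsqG G) x \<in> W_space G x"
      then obtain e where e: "e \<bullet> G x = 0" "2 *\<^sub>R x - a *\<^sub>R (2 *\<^sub>R (G x v* ?J)) = e v* ?J"
        unfolding Wx gn grad_rho by auto
      have "(2 *\<^sub>R d - (2 * a) *\<^sub>R G x - e) v* ?J = 0"
        using e(2) xd by (simp add: vm_diff vm_scale mult.commute)
      then have "AJ ?J *v (2 *\<^sub>R d - (2 * a) *\<^sub>R G x - e) = 0"
        using Jv_vm[of ?J "2 *\<^sub>R d - (2 * a) *\<^sub>R G x - e"] by simp
      then have "2 *\<^sub>R d - (2 * a) *\<^sub>R G x - e = 0" by (rule det_nz_imp_inj[OF dA])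
      then have "(2 *\<^sub>R d - (2 * a) *\<^sub>R G x - e) \<bullet> G x = 0" by simp
      then have "2 * (d \<bullet> G x) - 2 * a * (G x \<bullet> G x) = 0" using e(1) by (simp add: inner_diff_left)
      then show "a = a0" using gg by (simp add: a0_def field_simps)
    next
      assume a: "a = a0"
      define e where "e = 2 *\<^sub>R d - (2 * a0) *\<^sub>R G x"
      have "e \<bullet> G x = 0" using gg by (simp add: e_def a0_def inner_diff_left)
      moreover have "2 *\<^sub>R x - a *\<^sub>R (2 *\<^sub>R (G x v* ?J)) = e v* ?J"
        using xd a by (simp add: e_def vm_diff vm_scale)
      ultimately show "grad rho x - a *\<^sub>R grad (normsqG G) x \<in> W_space G x"
        unfolding Wx gn grad_rho by auto
    qed
    have "a_fun G x = a0" unfolding a_fun_def by (rule the_equality) (use P in auto)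
    then show ?thesis using z dpos by (simp add: d_def a0_def)
  qed
  have part1: "\<exists>r>0. \<forall>x \<in> ball 0 r \<inter> M_G G r - (V_G G \<union> Sing G). a_fun G x > 0"
  proof (intro exI[of _ r1] conjI ballI)
    show "r1 > 0" by (rule r1)
    fix x assume x: "x \<in> ball 0 r1 \<inter> M_G G r1 - (V_G G \<union> Sing G)"
    have "G x \<bullet> G x > 0" using x by (auto simp: V_G_def)
    then show "a_fun G x > 0" using P1[OF x] by (simp add: zero_less_divide_iff)
  qed
  have part2: "(\<exists>eps>0. \<exists>\<nu>. milnor_vector_field G eps \<nu>) \<and> rho_regular G" if DT: "Disc_trivial G"
  proof -
    obtain r2 where r2: "r2 > 0" "Disc G r2 \<subseteq> {0}" using DT unfolding Disc_trivial_def by blast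
    have singV: "G y = 0" if "y \<in> Sing G" "y \<in> ball 0 r2" for y
      using r2(2) that unfolding Disc_def by blast
    define r3 where "r3 = min r1 r2"
    have r3: "r3 > 0" using r1 r2 by (simp add: r3_def)
    have Q: "y \<notin> Sing G \<and> det (AJ (jacobian G y)) \<noteq> 0 \<and> y \<in> O1
             \<and> (zvec (jacobian G y) y = 0 \<longrightarrow> 0 < dvec (jacobian G y) y \<bullet> G y)"
      if y: "y \<in> ball 0 r3" "G y \<noteq> 0" for y
    proof -
      have nS: "y \<notin> Sing G" using singV y by (auto simp: r3_def)
      have dA: "det (AJ (jacobian G y)) \<noteq> 0" by (rule nsing_det[OF nS])
      have yB0: "y \<in> B0" using y r1B0 by (auto simp: r3_def r1_def B0_def)
      have "0 < dvec (jacobian G y) y \<bullet> G y" if z: "zvec (jacobian G y) y = 0"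
      proof -
        have yd: "y = dvec (jacobian G y) y v* jacobian G y" using z by (simp add: zvec_def)
        have "y \<in> Sdep r1"
          unfolding Sdep_eq
        proof (intro CollectI conjI exI)
          show "y \<in> ball 0 r1" using y by (auto simp: r3_def)
          show "(1::real) \<noteq> 0 \<or> (- 2 *\<^sub>R dvec (jacobian G y) y) \<noteq> 0" by simp
          show "1 *\<^sub>R (2 *\<^sub>R y) + (- 2 *\<^sub>R dvec (jacobian G y) y) v* jacobian G y = 0"
            by (subst yd) (simp add: vm_scale vm_neg)
        qed
        then have "y \<in> M_G G r1" unfolding MS using closure_subset by blast
        then have "y \<in> ball 0 r1 \<inter> M_G G r1 - (V_G G \<union> Sing G)"
          using y nS by (auto simp: r3_def V_G_def)
        then show ?thesis using P1 by blast
      qed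
      then show ?thesis using nS dA yB0 by (simp add: O1_def)
    qed
    define eps where "eps = r3 / 2"
    have eps: "eps > 0" using r3 by (simp add: eps_def)
    have epsB: "x \<in> ball 0 r3" if "x \<in> cball 0 eps" for x using that r3 by (simp add: eps_def)
    define \<nu> where "\<nu> y = mvec (jacobian G y) y (G y)" for y
    have props: "jacobian G x *v \<nu> x = beta (jacobian G x) x (G x) *\<^sub>R G x
        \<and> 0 < beta (jacobian G x) x (G x) \<and> 0 < x \<bullet> \<nu> x"
      if x: "x \<in> ball 0 r3" "G x \<noteq> 0" for x
      using mvec_props[of "jacobian G x" x "G x"] Q[OF x] by (simp add: \<nu>_def)
    have HDx: "x \<in> ball 0 r3 \<Longrightarrow> ((\<lambda>y. G y $ i) has_derivative (\<lambda>h. grad (\<lambda>y. G y $ i) x \<bullet> h)) (at x)" for x i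
      using HD r1B0 by (auto simp: r3_def)
    have mil: "milnor_vector_field G eps \<nu>"
      unfolding milnor_vector_field_def
    proof (intro conjI ballI)
      show "continuous_on (cball 0 eps - V_G G) \<nu>"
        unfolding \<nu>_def
      proof (rule continuous_on_subset[OF mcont], rule subsetI)
        fix x assume "x \<in> cball 0 eps - V_G G"
        then have "x \<in> cball 0 eps" "G x \<noteq> 0" by (auto simp: V_G_def)
        then show "x \<in> O1" using Q epsB by blast
      qed
      fix x assume x: "x \<in> cball 0 eps - V_G G"
      have xc: "x \<in> cball 0 eps" and Gx: "G x \<noteq> 0" using x by (auto simp: V_G_def)
      have xb: "x \<in> ball 0 r3" by (rule epsB[OF xc])
      note pr = props[OF xb Gx]
      have "frechet_derivative (Psi G) (at x) = PsiD G x"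
        using frechet_derivative_at[OF Psi_deriv[OF HDx[OF xb] Gx]] by simp
      moreover have "PsiD G x (\<nu> x) = 0"
      proof -
        define b where "b = beta (jacobian G x) x (G x)"
        have ng: "norm (G x) > 0" using Gx by simp
        have "G x \<bullet> G x = (norm (G x))^2" by (simp add: power2_norm_eq_inner)
        then show ?thesis using pr ng unfolding PsiD_def
          by (simp add: b_def[symmetric] power2_eq_square power3_eq_cube)
      qed
      ultimately show "frechet_derivative (Psi G) (at x) (\<nu> x) = 0" by simp
      show "\<nu> x \<bullet> grad rho x > 0" using pr by (simp add: grad_rho inner_commute)
      have "\<nu> x \<bullet> grad (normsqG G) x = 2 * (G x \<bullet> (jacobian G x *v \<nu> x))"
        by (simp add: grad_normsq[OF HDx[OF xb]] inner_commute[of "\<nu> x"] vm_inner)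
      also have "\<dots> = 2 * beta (jacobian G x) x (G x) * (G x \<bullet> G x)" using pr by simp
      also have "\<dots> > 0" using pr Gx by simp
      finally show "\<nu> x \<bullet> grad (normsqG G) x > 0" .
    qed
    have rr: "rho_regular G"
      unfolding rho_regular_def
    proof (intro exI[of _ r3] conjI ballI)
      show "r3 > 0" by (rule r3)
      have "{x \<in> ball 0 r3. G x \<noteq> 0 \<and> not_submersion_at G x} = {}"
      proof (rule ccontr)
        assume "{x \<in> ball 0 r3. G x \<noteq> 0 \<and> not_submersion_at G x} \<noteq> {}"
        then obtain x where xb: "x \<in> ball 0 r3" and Gx: "G x \<noteq> 0" and ns: "not_submersion_at G x" by blast
        note pr = props[OF xb Gx]
        have der: "((\<lambda>y. (rho y, Psi G y)) has_derivative (\<lambda>h. ((2 *\<^sub>R x) \<bullet> h, PsiD G x h))) (at x)"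
          by (rule has_derivative_Pair[OF rho_deriv Psi_deriv[OF HDx[OF xb] Gx]])
        have fd: "frechet_derivative (\<lambda>y. (rho y, Psi G y)) (at x) = (\<lambda>h. ((2 *\<^sub>R x) \<bullet> h, PsiD G x h))"
          using frechet_derivative_at[OF der] by simp
        have "CARD('p) \<le> dim (range (\<lambda>h. ((2 *\<^sub>R x) \<bullet> h, PsiD G x h)))"
          unfolding PsiD_def
          by (rule submersion_dim[where J="jacobian G x" and g="G x" and \<nu>="\<nu> x" and \<beta>="beta (jacobian G x) x (G x)" and y=x])
             (use Q[OF xb Gx] pr Gx in auto)
        then show False using ns by (simp add: not_submersion_at_def fd)
      qed
      then have "M_Psi G r3 = {}" by (simp add: M_Psi_def)
      then show "G x \<in> Disc G r3" if "x \<in> M_Psi G r3 \<inter> ball 0 r3" for x using that by simp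
    qed
    show ?thesis using mil rr eps by blast
  qed
  show ?thesis using part1 part2 by blast
qed

end
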